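(* Let $E,F\subseteq\mathbb{R}$ be Lebesgue-measurable and let $m:E\to F$ be a bijection which is strictly increasing and measure-preserving (with respect to Lebesgue measure). Then $m^{-1}$ is also strictly increasing and measure-preserving; that is, $m\in\mathbb{MO}(E,F)$.
   Context: A map $m:E\to F$ is measure-preserving if for every Lebesgue-measurable $A\subseteq F$, $m^{-1}(A)$ is Lebesgue-measurable and $\lambda(m^{-1}(A))=\lambda(A)$. $\mathbb{MO}(E,F)$ is the set of strictly increasing bijections $m:E\to F$ such that both $m$ and $m^{-1}$ are measure-preserving. *)

theory Defs
  imports "HOL-Analysis.Analysis"
begin

text \<open>A map m : E -> F (represented as a total function real => real whose
behaviour outside E is irrelevant) is measure-preserving if for every
Lebesgue-measurable A \<subseteq> F, the preimage m^{-1}(A) = {x \<in> E. m x \<in> A}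
is Lebesgue-measurable and has the same (possibly infinite) Lebesgue measure as A.\<close>
definition measure_preserving :: "(real \<Rightarrow> real) \<Rightarrow> real set \<Rightarrow> real set \<Rightarrow> bool" where
  "measure_preserving m E F \<longleftrightarrow>
     (\<forall>A. A \<in> sets lebesgue \<and> A \<subseteq> F \<longrightarrow>
        (m -` A \<inter> E) \<in> sets lebesgue \<and>
        emeasure lebesgue (m -` A \<inter> E) = emeasure lebesgue A)"

definition MO :: "real set \<Rightarrow> real set \<Rightarrow> (real \<Rightarrow> real) set" where
  "MO E F = {m. bij_betw m E F \<and> strict_mono_on E m \<and>
                measure_preserving m E F \<and> measure_preserving (inv_into E m) F E}"

end

theory Submission
  imports Defs
begin

lemma pre_meas:
  fixes g :: "real \<Rightarrow> real"
  assumes "mono_on F g" "F \<in> sets lebesgue" "S \<in> sets borel"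
  shows "g -` S \<inter> F \<in> sets lebesgue"
proof -
  have "g -` S \<inter> space (restrict_space borel F) \<in> sets (restrict_space borel F)"
    using borel_measurable_mono_on_fnc[OF assms(1)] assms(3) by (rule measurable_sets)
  then obtain T where T: "T \<in> sets borel" "g -` S \<inter> F = F \<inter> T"
    by (auto simp: sets_restrict_space space_restrict_space)
  have "T \<in> sets lebesgue" using T(1) by auto
  then show ?thesis using T(2) assms(2) by auto
qed

theorem mainTheorem12:
  fixes m :: "real \<Rightarrow> real" and E F :: "real set"
  assumes "E \<in> sets lebesgue" and "F \<in> sets lebesgue"
    and "bij_betw m E F" and "strict_mono_on E m"
    and "measure_preserving m E F"
  shows "strict_mono_on F (inv_into E m) \<and> measure_preserving (inv_into E m) F E \<and> m \<in> MO E F"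
proof -
  define g where "g = inv_into E m"
  have gm: "\<And>x. x \<in> E \<Longrightarrow> g (m x) = x" "\<And>x. x \<in> E \<Longrightarrow> m x \<in> F"
    using assms(3) by (auto simp: g_def bij_betw_def)
  have mg: "\<And>y. y \<in> F \<Longrightarrow> m (g y) = y" "\<And>y. y \<in> F \<Longrightarrow> g y \<in> E"
    using assms(3) by (auto simp: g_def bij_betw_def f_inv_into_f inv_into_into)
  have sm: "strict_mono_on F g"
  proof (rule strict_mono_onI)
    fix r s assume rs: "r \<in> F" "s \<in> F" "r < s"
    show "g r < g s"
    proof (rule ccontr)
      assume "\<not> g r < g s"
      then have "g s \<le> g r" by simp
      then have "m (g s) \<le> m (g r)" using assms(4) mg rs
        by (metis order_le_less strict_mono_onD)
      then show False using mg rs by simp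
    qed
  qed
  then have mono: "mono_on F g" using strict_mono_on_imp_mono_on by blast
  have mp: "\<And>A. A \<in> sets lebesgue \<Longrightarrow> A \<subseteq> F \<Longrightarrow> (m -` A \<inter> E) \<in> sets lebesgue \<and>
        emeasure lebesgue (m -` A \<inter> E) = emeasure lebesgue A"
    using assms(5) unfolding measure_preserving_def by blast
  have bk: "\<And>B. B \<subseteq> E \<Longrightarrow> m -` (g -` B \<inter> F) \<inter> E = B"
    using gm mg by auto
  have gmp: "measure_preserving g F E"
    unfolding measure_preserving_def
  proof (intro allI impI)
    fix B assume B: "B \<in> sets lebesgue \<and> B \<subseteq> E"
    obtain S N N' where SN: "B = S \<union> N" "N \<subseteq> N'" "N' \<in> null_sets lborel" "S \<in> sets lborel"
      using B sets_completionE by blast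
    have S1: "g -` S \<inter> F \<in> sets lebesgue" using pre_meas[OF mono assms(2)] SN(4) by simp
    have N'b: "N' \<in> sets borel" using SN(3) by (auto simp: null_sets_def)
    define M' where "M' = g -` N' \<inter> F"
    have M'l: "M' \<in> sets lebesgue" unfolding M'_def using pre_meas[OF mono assms(2) N'b] .
    have eq: "m -` M' \<inter> E = N' \<inter> E" unfolding M'_def using gm mg by auto
    have N'l: "N' \<in> null_sets lebesgue" using SN(3) by (rule null_sets_completionI)
    have NE: "N' \<inter> E \<in> null_sets lebesgue"
      by (rule null_sets_completion_subset[OF _ N'l]) blast
    have "M' \<subseteq> F" unfolding M'_def by blast
    from mp[OF M'l this] have "emeasure lebesgue M' = emeasure lebesgue (N' \<inter> E)"
      unfolding eq by simp
    also have "\<dots> = 0" using NE by (simp add: null_sets_def)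
    finally have M'n: "M' \<in> null_sets lebesgue" using M'l by (simp add: null_sets_def)
    have Nn: "g -` N \<inter> F \<in> null_sets lebesgue"
      by (rule null_sets_completion_subset[OF _ M'n]) (use SN(2) in \<open>auto simp: M'_def\<close>)
    have Nm: "g -` N \<inter> F \<in> sets lebesgue" using Nn by (simp add: null_sets_def)
    have "g -` B \<inter> F = (g -` S \<inter> F) \<union> (g -` N \<inter> F)" using SN(1) by blast
    then have meas: "g -` B \<inter> F \<in> sets lebesgue"
      using S1 Nm by (metis sets.Un)
    have "emeasure lebesgue (g -` B \<inter> F) = emeasure lebesgue (m -` (g -` B \<inter> F) \<inter> E)"
      using mp[OF meas] by auto
    also have "\<dots> = emeasure lebesgue B" using bk B by simp
    finally show "g -` B \<inter> F \<in> sets lebesgue \<and> emeasure lebesgue (g -` B \<inter> F) = emeasure lebesgue B"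
      using meas by simp
  qed
  show ?thesis using sm gmp assms unfolding g_def MO_def by simp
qed

end
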